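(* Let $D$ be a positive integer and let $H$ be a multigraph (loopless, parallel edges allowed) with $\Delta(H)\le D$. Suppose that each edge of $H$ shares at least one endpoint with all but at most $D-2$ of the other edges of $H$. Then $|E(H)|\le \frac52 D$.
   Context: Degrees in a multigraph count edges with multiplicity. *)

theory Defs
  imports Complex_Main
begin

text \<open>A finite loopless multigraph: a finite set E of edge identifiers, each edge e
having a set ends e of exactly two distinct endpoints. Parallel edges are distinct
identifiers with the same ends.\<close>

definition loopless_multigraph :: "'e set \<Rightarrow> ('e \<Rightarrow> 'v set) \<Rightarrow> bool" where
  "loopless_multigraph E ends \<longleftrightarrow> finite E \<and> (\<forall>e\<in>E. card (ends e) = 2)"

definition mdegree :: "'e set \<Rightarrow> ('e \<Rightarrow> 'v set) \<Rightarrow> 'v \<Rightarrow> nat" where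
  "mdegree E ends v = card {e \<in> E. v \<in> ends e}"

definition max_degree_le :: "'e set \<Rightarrow> ('e \<Rightarrow> 'v set) \<Rightarrow> nat \<Rightarrow> bool" where
  "max_degree_le E ends D \<longleftrightarrow> (\<forall>v. mdegree E ends v \<le> D)"

definition disjoint_edges :: "'e set \<Rightarrow> ('e \<Rightarrow> 'v set) \<Rightarrow> 'e \<Rightarrow> 'e set" where
  "disjoint_edges E ends e = {f \<in> E - {e}. ends f \<inter> ends e = {}}"

end

theory Submission
  imports Defs
begin

lemma arith_core:
  fixes m D d k r SN SR :: int
  assumes H1: "2*m \<ge> 5*D+1" and D1: "D \<ge> 1"
    and H2: "SN \<ge> k*(m-D+2-d) + d" and H2': "SN \<le> k*D"
    and H3: "2*m = d + SN + SR" and H3': "SR \<ge> r*d"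
    and H4: "(1+k+r)*d \<le> 2*m"
    and H5: "k + r \<ge> 5" and k1: "k \<ge> 1" and r0: "r \<ge> 0"
    and H6: "d \<ge> m - 2*D + 3" and H6': "d \<le> D"
  shows False
proof -
  have k3: "k \<ge> 3"
  proof (rule ccontr)
    assume "\<not> k \<ge> 3"
    hence "k = 1 \<or> k = 2" using k1 by linarith
    thus False
    proof
      assume "k = 1" thus False using H2 H2' H1 D1 by simp
    next
      assume "k = 2" thus False using H2 H2' H1 H6' D1 by simp
    qed
  qed
  have key: "2*m \<ge> k*(m-D+2) + (r+2-k)*d"
    using H2 H3 H3' by (simp add: algebra_simps)
  show False
  proof (cases "k \<le> r+2")
    case True
    have "(r+2-k)*d \<ge> (r+2-k)*(m-2*D+3)"
      by (rule mult_left_mono[OF H6]) (use True in simp)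
    hence a: "2*m \<ge> k*(D-1) + (r+2)*(m-2*D+3)" using key by (simp add: algebra_simps)
    have "k*(D-1) \<ge> 3*(D-1)" by (rule mult_right_mono[OF k3]) (use D1 in simp)
    moreover have "(r+2)*(m-2*D+3) \<ge> 4*(m-2*D+3)"
      by (rule mult_right_mono) (use H5 True H1 D1 in linarith)+
    moreover have aux: "\<And>X Y. 3*(D-1) \<le> X \<Longrightarrow> 4*(m-2*D+3) \<le> Y \<Longrightarrow> X + Y \<le> 2*m \<Longrightarrow> False"
      using H1 unfolding ring_distribs by linarith
    ultimately show False using a by blast
  next
    case False
    define n where "n = 1+k+r"
    have "(k-r-2)*((1+k+r)*d) \<le> (k-r-2)*(2*m)"
      by (rule mult_left_mono[OF H4]) (use False in simp)
    hence b: "n*(2*m) \<ge> n*(k*(m-D+2)) - (k-r-2)*(2*m)"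
    proof -
      assume h: "(k-r-2)*((1+k+r)*d) \<le> (k-r-2)*(2*m)"
      have "n*(2*m) \<ge> n*(k*(m-D+2) + (r+2-k)*d)"
        by (rule mult_left_mono[OF key]) (simp add: n_def; use r0 k1 in linarith)
      thus ?thesis using h unfolding n_def by (simp add: algebra_simps)
    qed
    have c: "(2*m)*(2*k-1) \<ge> n*k*(m-D+2)"
      using b unfolding n_def by (simp add: algebra_simps)
    have "5*(m-D+2) \<ge> 3*m+1" using H1 unfolding ring_distribs by linarith
    hence "(n*k)*(5*(m-D+2)) \<ge> (n*k)*(3*m+1)"
      by (rule mult_left_mono) (simp add: n_def; use r0 k1 in simp)
    with c have d1: "10*m*(2*k-1) \<ge> 3*m*(n*k) + n*k" by (simp add: algebra_simps)
    have "3*(n*k) \<ge> 20*k - 10"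
    proof (cases "n \<ge> 7")
      case True
      hence "n*k \<ge> 7*k" by (rule mult_right_mono) (use k1 in simp)
      thus ?thesis using k1 by linarith
    next
      case False
      hence "n = 6" using H5 n_def by linarith
      moreover have "k \<le> 5" using False n_def r0 by linarith
      ultimately show ?thesis by simp
    qed
    hence "m*(3*(n*k)) \<ge> m*(20*k-10)"
      by (rule mult_left_mono) (use H1 D1 in linarith)
    moreover have "n*k > 0" using k1 r0 n_def by simp
    ultimately show False using d1 by (simp add: algebra_simps)
  qed
qed

lemma card2_eq:
  assumes "card S = 2" "u \<in> S" "v \<in> S" "u \<noteq> v"
  shows "S = {u, v}"
proof -
  obtain x y where "S = {x,y}" "x \<noteq> y" using assms(1) unfolding card_2_iff by blast
  thus ?thesis using assms by auto
qed

lemma per_edge: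
  assumes LM: "loopless_multigraph E ends" and e: "e \<in> E" and uv: "ends e = {u,v}" "u \<noteq> v"
  shows "card (disjoint_edges E ends e) + mdegree E ends u + mdegree E ends v
         = card E + card {f\<in>E. ends f = {u,v}}"
proof -
  have fin: "finite E" using LM unfolding loopless_multigraph_def by auto
  let ?A = "{f\<in>E. u \<in> ends f}" and ?B = "{f\<in>E. v \<in> ends f}"
  have i: "?A \<inter> ?B = {f\<in>E. ends f = {u,v}}"
  proof
    show "?A \<inter> ?B \<subseteq> {f\<in>E. ends f = {u,v}}"
    proof
      fix f assume "f \<in> ?A \<inter> ?B"
      moreover hence "card (ends f) = 2" using LM unfolding loopless_multigraph_def by auto
      ultimately have "ends f = {u,v}" using card2_eq[of "ends f" u v] uv(2) by simp
      thus "f \<in> {f\<in>E. ends f = {u,v}}" using \<open>f \<in> ?A \<inter> ?B\<close> by simp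
    qed
  qed auto
  have cu: "card ?A + card ?B = card (?A \<union> ?B) + card (?A \<inter> ?B)"
    by (rule card_Un_Int) (use fin in auto)
  have dj: "disjoint_edges E ends e = E - (?A \<union> ?B)"
    unfolding disjoint_edges_def using uv e by auto
  have ce: "card (E - (?A \<union> ?B)) + card (?A \<union> ?B) = card E"
    using card_Diff_subset[of "?A \<union> ?B" E] card_mono[of E "?A \<union> ?B"] fin by auto
  show ?thesis unfolding mdegree_def dj using cu ce unfolding i by linarith
qed

lemma card_filter_sum:
  assumes "finite A"
  shows "card {x\<in>A. P x} = (\<Sum>x\<in>A. if P x then 1 else 0)"
  using sum.inter_filter[OF assms, of "\<lambda>_. (1::nat)" P] by simp

lemma handshake:
  assumes LM: "loopless_multigraph E ends"
  shows "(\<Sum>v\<in>\<Union>(ends ` E). mdegree E ends v) = 2 * card E"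
proof -
  have fin: "finite E" and c2: "\<And>e. e \<in> E \<Longrightarrow> card (ends e) = 2"
    using LM unfolding loopless_multigraph_def by auto
  have fe: "\<And>e. e \<in> E \<Longrightarrow> finite (ends e)" by (rule card_ge_0_finite) (simp add: c2)
  let ?V = "\<Union>(ends ` E)"
  have finV: "finite ?V" using fin fe by auto
  have "(\<Sum>v\<in>?V. mdegree E ends v) = (\<Sum>v\<in>?V. \<Sum>e\<in>E. if v \<in> ends e then 1 else 0)"
    unfolding mdegree_def using card_filter_sum[OF fin] by simp
  also have "\<dots> = (\<Sum>e\<in>E. \<Sum>v\<in>?V. if v \<in> ends e then 1 else 0)" by (rule sum.swap)
  also have "\<dots> = (\<Sum>e\<in>E. card (ends e))"
  proof (rule sum.cong[OF refl])
    fix e assume "e \<in> E"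
    hence "{v\<in>?V. v \<in> ends e} = ends e" by auto
    hence "card (ends e) = card {v\<in>?V. v \<in> ends e}" by simp
    also have "\<dots> = (\<Sum>v\<in>?V. if v \<in> ends e then 1 else 0)"
      by (rule card_filter_sum[OF finV])
    finally show "(\<Sum>v\<in>?V. if v \<in> ends e then 1 else 0) = card (ends e)" by simp
  qed
  also have "\<dots> = (\<Sum>e\<in>E. 2)" using c2 by simp
  finally show ?thesis by simp
qed

lemma nbr_partition:
  fixes z :: 'v and ends :: "'e \<Rightarrow> 'v set"
  assumes LM: "loopless_multigraph E ends"
  defines "N \<equiv> {y. \<exists>f\<in>E. z \<in> ends f \<and> y \<in> ends f \<and> y \<noteq> z}"
  shows "finite N" "mdegree E ends z = (\<Sum>y\<in>N. card {f\<in>E. ends f = {z,y}})"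
proof -
  have fin: "finite E" and c2: "\<And>e. e \<in> E \<Longrightarrow> card (ends e) = 2"
    using LM unfolding loopless_multigraph_def by auto
  have fe: "\<And>e. e \<in> E \<Longrightarrow> finite (ends e)" by (rule card_ge_0_finite) (simp add: c2)
  have "N \<subseteq> \<Union>(ends ` E)" unfolding N_def by auto
  thus fN: "finite N" using fin fe by (meson finite_UN_I finite_subset)
  have eq: "{f\<in>E. z \<in> ends f} = (\<Union>y\<in>N. {f\<in>E. ends f = {z,y}})"
  proof
    show "{f\<in>E. z \<in> ends f} \<subseteq> (\<Union>y\<in>N. {f\<in>E. ends f = {z,y}})"
    proof
      fix f assume f: "f \<in> {f\<in>E. z \<in> ends f}"
      have cf: "card (ends f) = 2" using c2 f by simp
      then obtain a b where ab: "ends f = {a,b}" "a \<noteq> b" unfolding card_2_iff by blast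
      then obtain y where y: "y \<in> ends f" "y \<noteq> z" by auto
      have zf: "z \<in> ends f" using f by simp
      have "ends f = {z,y}" by (rule card2_eq[OF cf zf y(1)]) (use y(2) in simp)
      moreover have "y \<in> N" unfolding N_def using f y by auto
      ultimately show "f \<in> (\<Union>y\<in>N. {f\<in>E. ends f = {z,y}})" using f by auto
    qed
  qed auto
  have "card {f\<in>E. z \<in> ends f} = (\<Sum>y\<in>N. card {f\<in>E. ends f = {z,y}})"
    unfolding eq
  proof (rule card_UN_disjoint[OF fN])
    show "\<forall>i\<in>N. finite {f \<in> E. ends f = {z, i}}" using fin by auto
    show "\<forall>i\<in>N. \<forall>j\<in>N. i \<noteq> j \<longrightarrow> {f \<in> E. ends f = {z, i}} \<inter> {f \<in> E. ends f = {z, j}} = {}"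
      unfolding N_def by (auto simp: doubleton_eq_iff)
  qed
  thus "mdegree E ends z = (\<Sum>y\<in>N. card {f\<in>E. ends f = {z,y}})" unfolding mdegree_def .
qed

theorem theorem4:
  fixes E :: "'e set" and ends :: "'e \<Rightarrow> 'v set" and D :: nat
  assumes "D > 0"
    and "loopless_multigraph E ends"
    and "max_degree_le E ends D"
    and "\<forall>e\<in>E. int (card (disjoint_edges E ends e)) \<le> int D - 2"
  shows "real (card E) \<le> 5 / 2 * real D"
proof (rule ccontr)
  assume nt: "\<not> ?thesis"
  note LM = assms(2)
  define m where "m = card E"
  define deg where "deg = mdegree E ends"
  have H1: "2 * int m \<ge> 5 * int D + 1"
  proof -
    have "2 * real m > 5 * real D" using nt unfolding m_def by linarith
    hence "real (5 * D) < real (2 * m)" by simp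
    hence "5 * D < 2 * m" by (simp only: of_nat_less_iff)
    thus ?thesis by linarith
  qed
  have D1: "int D \<ge> 1" using assms(1) by simp
  have fin: "finite E" and c2: "\<And>e. e \<in> E \<Longrightarrow> card (ends e) = 2"
    using LM unfolding loopless_multigraph_def by auto
  have fe: "\<And>e. e \<in> E \<Longrightarrow> finite (ends e)" by (rule card_ge_0_finite) (simp add: c2)
  define V where "V = \<Union>(ends ` E)"
  have finV: "finite V" unfolding V_def using fin fe by auto
  have degD: "\<And>v. deg v \<le> D" using assms(3) unfolding max_degree_le_def deg_def by auto
  have hs: "(\<Sum>v\<in>V. deg v) = 2 * m" unfolding V_def deg_def m_def by (rule handshake[OF LM])
  have V6: "card V \<ge> 6"
  proof (rule ccontr)
    assume "\<not> card V \<ge> 6"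
    hence "card V \<le> 5" by simp
    have "(\<Sum>v\<in>V. deg v) \<le> card V * D" using sum_bounded_above[of V deg D] degD by simp
    also have "\<dots> \<le> 5 * D" using \<open>card V \<le> 5\<close> by simp
    finally show False using hs H1 by linarith
  qed
  hence "V \<noteq> {}" by auto
  define \<delta> where "\<delta> = Min (deg ` V)"
  have "\<delta> \<in> deg ` V" unfolding \<delta>_def using finV \<open>V \<noteq> {}\<close> by (intro Min_in) auto
  then obtain z where zV: "z \<in> V" and dz: "deg z = \<delta>" by auto
  have zmin: "\<And>v. v \<in> V \<Longrightarrow> \<delta> \<le> deg v" unfolding \<delta>_def using finV by auto
  define N where "N = {y. \<exists>f\<in>E. z \<in> ends f \<and> y \<in> ends f \<and> y \<noteq> z}"
  define mu where "mu y = card {f\<in>E. ends f = {z,y}}" for y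
  have fN: "finite N" and part: "deg z = (\<Sum>y\<in>N. mu y)"
    using nbr_partition[OF LM, of z] unfolding N_def mu_def deg_def by auto
  have NV: "N \<subseteq> V" unfolding N_def V_def by auto
  have zN: "z \<notin> N" unfolding N_def by auto
  have edge_y: "\<And>y. y \<in> N \<Longrightarrow> int (deg y) \<ge> int m - int D + 2 - int \<delta> + int (mu y) \<and> mu y \<ge> 1"
  proof -
    fix y assume "y \<in> N"
    then obtain f where f: "f \<in> E" "z \<in> ends f" "y \<in> ends f" "y \<noteq> z" unfolding N_def by auto
    hence ef: "ends f = {z,y}" using card2_eq[of "ends f" z y] c2 by auto
    have pe: "card (disjoint_edges E ends f) + deg z + deg y = m + mu y"
      using per_edge[OF LM f(1) ef] f(4) unfolding deg_def m_def mu_def by auto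
    have "int (card (disjoint_edges E ends f)) \<le> int D - 2" using assms(4) f(1) by auto
    moreover have "mu y \<ge> 1"
    proof -
      have "f \<in> {f\<in>E. ends f = {z,y}}" using f ef by auto
      moreover have "finite {f\<in>E. ends f = {z,y}}" using fin by auto
      ultimately have "card {f\<in>E. ends f = {z,y}} > 0" using card_gt_0_iff by blast
      thus ?thesis unfolding mu_def by simp
    qed
    ultimately show "int (deg y) \<ge> int m - int D + 2 - int \<delta> + int (mu y) \<and> mu y \<ge> 1"
      using pe dz by linarith
  qed
  define k where "k = card N"
  define R where "R = V - insert z N"
  define r where "r = card R"
  have fR: "finite R" unfolding R_def using finV by auto
  have sub: "insert z N \<subseteq> V" using zV NV by auto
  have cardV: "card V = 1 + k + r"
  proof -
    have "card V = card (V - insert z N) + card (insert z N)"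
      using card_Diff_subset[OF finite_subset[OF sub finV] sub] card_mono[OF finV sub] by linarith
    thus ?thesis unfolding R_def r_def k_def using zN fN by simp
  qed
  have sumV: "(\<Sum>v\<in>V. deg v) = deg z + (\<Sum>v\<in>N. deg v) + (\<Sum>v\<in>R. deg v)"
  proof -
    have "(\<Sum>v\<in>V. deg v) = (\<Sum>v\<in>V - insert z N. deg v) + (\<Sum>v\<in>insert z N. deg v)"
      by (rule sum.subset_diff[OF sub finV])
    thus ?thesis unfolding R_def using zN fN by simp
  qed
  have Nne: "N \<noteq> {}"
  proof -
    obtain f where f: "f \<in> E" "z \<in> ends f" using zV unfolding V_def by auto
    obtain a b where ab: "ends f = {a,b}" "a \<noteq> b" using c2[OF f(1)] unfolding card_2_iff by blast
    then obtain y where "y \<in> ends f" "y \<noteq> z" by auto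
    thus ?thesis unfolding N_def using f by auto
  qed
  hence k1: "int k \<ge> 1" unfolding k_def using fN by (simp add: Suc_le_eq card_gt_0_iff)
  have SN: "int (\<Sum>y\<in>N. deg y) \<ge> int k * (int m - int D + 2 - int \<delta>) + int \<delta>"
  proof -
    have "int (\<Sum>y\<in>N. deg y) = (\<Sum>y\<in>N. int (deg y))" by simp
    also have "\<dots> \<ge> (\<Sum>y\<in>N. (int m - int D + 2 - int \<delta>) + int (mu y))"
      by (rule sum_mono) (use edge_y in auto)
    finally have "int (\<Sum>y\<in>N. deg y) \<ge> (\<Sum>y\<in>N. (int m - int D + 2 - int \<delta>) + int (mu y))" .
    moreover have "(\<Sum>y\<in>N. (int m - int D + 2 - int \<delta>) + int (mu y)) = int k * (int m - int D + 2 - int \<delta>) + int \<delta>"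
      using part dz unfolding k_def by (simp add: sum.distrib)
    ultimately show ?thesis by simp
  qed
  have SN': "int (\<Sum>y\<in>N. deg y) \<le> int k * int D"
  proof -
    have "(\<Sum>y\<in>N. deg y) \<le> card N * D" using sum_bounded_above[of N deg D] degD by simp
    thus ?thesis unfolding k_def by (simp only: of_nat_mult[symmetric] of_nat_le_iff)
  qed
  have SR: "int (\<Sum>y\<in>R. deg y) \<ge> int r * int \<delta>"
  proof -
    have "card R * \<delta> \<le> (\<Sum>y\<in>R. deg y)" using sum_bounded_below[of R \<delta> deg] zmin unfolding R_def by auto
    thus ?thesis unfolding r_def by (simp only: of_nat_mult[symmetric] of_nat_le_iff)
  qed
  have H4: "(1 + int k + int r) * int \<delta> \<le> 2 * int m"
  proof -
    have "card V * \<delta> \<le> (\<Sum>y\<in>V. deg y)" using sum_bounded_below[of V \<delta> deg] zmin by auto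
    hence "card V * \<delta> \<le> 2 * m" using hs by simp
    hence "int (card V * \<delta>) \<le> int (2 * m)" by (simp only: of_nat_le_iff)
    thus ?thesis unfolding cardV by (simp add: algebra_simps)
  qed
  have H3: "2 * int m = int \<delta> + int (\<Sum>y\<in>N. deg y) + int (\<Sum>y\<in>R. deg y)"
  proof -
    have "2 * m = \<delta> + (\<Sum>y\<in>N. deg y) + (\<Sum>y\<in>R. deg y)" using sumV hs dz by simp
    hence "int (2 * m) = int (\<delta> + (\<Sum>y\<in>N. deg y) + (\<Sum>y\<in>R. deg y))" by (rule arg_cong)
    thus ?thesis by (simp only: of_nat_add of_nat_mult of_nat_numeral)
  qed
  obtain y0 where y0: "y0 \<in> N" using Nne by auto
  have H6: "int \<delta> \<ge> int m - 2 * int D + 3"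
  proof -
    have a: "int (deg y0) \<ge> int m - int D + 2 - int \<delta> + int (mu y0)" and b: "mu y0 \<ge> 1"
      using edge_y[OF y0] by auto
    have c: "int (deg y0) \<le> int D" using degD[of y0] by simp
    from b have "int (mu y0) \<ge> 1" by simp
    with a c show ?thesis by linarith
  qed
  have H6': "int \<delta> \<le> int D" using degD[of z] dz by simp
  have "k + r \<ge> 5" using V6 cardV by simp
  hence H5: "int k + int r \<ge> 5" by simp
  have r0: "int r \<ge> 0" by simp
  show False
    using arith_core[OF H1 D1 SN SN' H3 SR H4 H5 k1 r0 H6 H6'] .
qed

end
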